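(* Let $\mathcal{A}$ be a pOC with state set $Q$ and let $p,q\in Q$ be such that $[p{\downarrow}q]>0$ and $\mathrm{Pre}^*(q(0))\cap\mathrm{Post}^*(p(1))$ is finite. Then $$E(p{\downarrow}q)\le\frac{15|Q|^3}{x_{\min}^{4|Q|^3}}.$$
   Context: A pOC is $\mathcal{A}=(Q,\delta^{=0},\delta^{>0},P^{=0},P^{>0})$ with the following components. - $\delta^{>0}\subseteq Q\times\{-1,0,1\}\times Q$ are the positive rules and $\delta^{=0}\subseteq Q\times\{0,1\}\times Q$ are the zero rules. Every state has both kinds of outgoing rule. - $P^{>0}$ and $P^{=0}$ are positive rational probability distributions over the outgoing rules of each state. $\mathcal{M}_\mathcal{A}$ is the Markov chain on configurations $p(i)$ with the following transitions: - $p(0)\to q(c)$ with probability $P^{=0}(p,c,q)$; - for $i\ge1$, $p(i)\to q(i+c)$ with probability $P^{>0}(p,c,q)$. $\mathrm{Pre}^*(C)$ and $\mathrm{Post}^*(C)$ are the sets of configurations from which $C$ is reachable, respectively which are reachable from $C$. $\mathrm{Run}(p{\downarrow}q)$ is the set of runs from $p(1)$ that visit $q(0)$ with the counter positive before that visit. $[p{\downarrow}q]$ is its probability, and $E(p{\downarrow}q)$ is the conditional expected number of transitions until the first visit of $q(0)$ given $\mathrm{Run}(p{\downarrow}q)$. $x_{\min}$ is the least positive probability used in the rules of $\mathcal{A}$. *)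

theory Defs
  imports Complex_Main
begin

text \<open>P0 r c s is the probability of the zero
rule (r,c,s), Pp r c s that of the positive rule (r,c,s); a rule is present
(belongs to delta) iff its probability is positive.\<close>

definition pOC :: "('q::finite \<Rightarrow> int \<Rightarrow> 'q \<Rightarrow> real) \<Rightarrow> ('q \<Rightarrow> int \<Rightarrow> 'q \<Rightarrow> real) \<Rightarrow> bool" where
  "pOC P0 Pp \<longleftrightarrow>
     (\<forall>r c s. P0 r c s \<ge> 0 \<and> Pp r c s \<ge> 0) \<and>
     (\<forall>r c s. P0 r c s \<noteq> 0 \<longrightarrow> c \<in> {0, 1}) \<and>
     (\<forall>r c s. Pp r c s \<noteq> 0 \<longrightarrow> c \<in> {-1, 0, 1}) \<and>
     (\<forall>r c s. P0 r c s \<in> \<rat> \<and> Pp r c s \<in> \<rat>) \<and>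
     (\<forall>r. (\<Sum>c\<in>{0, 1}. \<Sum>s\<in>UNIV. P0 r c s) = 1) \<and>
     (\<forall>r. (\<Sum>c\<in>{-1, 0, 1}. \<Sum>s\<in>UNIV. Pp r c s) = 1)"

definition step :: "('q \<Rightarrow> int \<Rightarrow> 'q \<Rightarrow> real) \<Rightarrow> ('q \<Rightarrow> int \<Rightarrow> 'q \<Rightarrow> real) \<Rightarrow> (('q \<times> int) \<times> ('q \<times> int)) set" where
  "step P0 Pp = {((r, i), (s, j)). (i = 0 \<and> P0 r (j - i) s > 0) \<or> (i > 0 \<and> Pp r (j - i) s > 0)}"

definition Pre_star where
  "Pre_star P0 Pp C = {c. \<exists>d\<in>C. (c, d) \<in> (step P0 Pp)\<^sup>*}"

definition Post_star where
  "Post_star P0 Pp C = {d. \<exists>c\<in>C. (c, d) \<in> (step P0 Pp)\<^sup>*}"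

text \<open>taboo P0 Pp n c d: probability that the chain started in c is in d after exactly
n transitions, the counter being positive in all configurations before step n.\<close>

fun taboo :: "('q::finite \<Rightarrow> int \<Rightarrow> 'q \<Rightarrow> real) \<Rightarrow> ('q \<Rightarrow> int \<Rightarrow> 'q \<Rightarrow> real) \<Rightarrow> nat \<Rightarrow> ('q \<times> int) \<Rightarrow> ('q \<times> int) \<Rightarrow> real" where
  "taboo P0 Pp 0 c d = (if c = d then 1 else 0)"
| "taboo P0 Pp (Suc n) (r, i) d =
     (if i > 0 then (\<Sum>s\<in>UNIV. \<Sum>k\<in>{-1, 0, 1}. Pp r k s * taboo P0 Pp n (s, i + k) d) else 0)"

text \<open>[p down q]: probability of Run(p down q) (disjoint union over the time of the first
visit of q(0)).\<close>

definition pdown :: "('q::finite \<Rightarrow> int \<Rightarrow> 'q \<Rightarrow> real) \<Rightarrow> ('q \<Rightarrow> int \<Rightarrow> 'q \<Rightarrow> real) \<Rightarrow> 'q \<Rightarrow> 'q \<Rightarrow> real" where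
  "pdown P0 Pp p q = (\<Sum>n. taboo P0 Pp n (p, 1) (q, 0))"

text \<open>E(p down q): conditional expected number of transitions until the first visit of q(0)
given Run(p down q) (meaningful when the series below converges).\<close>

definition Edown :: "('q::finite \<Rightarrow> int \<Rightarrow> 'q \<Rightarrow> real) \<Rightarrow> ('q \<Rightarrow> int \<Rightarrow> 'q \<Rightarrow> real) \<Rightarrow> 'q \<Rightarrow> 'q \<Rightarrow> real" where
  "Edown P0 Pp p q = (\<Sum>n. real n * taboo P0 Pp n (p, 1) (q, 0)) / pdown P0 Pp p q"

definition xmin :: "('q::finite \<Rightarrow> int \<Rightarrow> 'q \<Rightarrow> real) \<Rightarrow> ('q \<Rightarrow> int \<Rightarrow> 'q \<Rightarrow> real) \<Rightarrow> real" where
  "xmin P0 Pp = Min ({P0 r c s | r c s. P0 r c s > 0} \<union> {Pp r c s | r c s. Pp r c s > 0})"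

end

theory Submission imports Defs begin

definition KK :: "int set" where "KK = {-1,0,1}"

lemma finite_KK[simp]: "finite KK" by (simp add: KK_def)

lemma taboo_Suc': "taboo P0 Pp (Suc n) c d =
   (if snd c > 0 then (\<Sum>s\<in>UNIV. \<Sum>k\<in>KK. Pp (fst c) k s * taboo P0 Pp n (s, snd c + k) d) else 0)"
  by (cases c) (simp add: KK_def)

declare taboo.simps(2)[simp del]

definition pst :: "('q \<Rightarrow> int \<Rightarrow> 'q \<Rightarrow> real) \<Rightarrow> (('q \<times> int) \<times> ('q \<times> int)) set" where
  "pst Pp = {((r, i), (s, j)). i > 0 \<and> Pp r (j - i) s > 0}"

locale poc =
  fixes P0 Pp :: "'q::finite \<Rightarrow> int \<Rightarrow> 'q \<Rightarrow> real"
  assumes poc: "pOC P0 Pp"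
begin

abbreviation "tab \<equiv> taboo P0 Pp"
abbreviation "P \<equiv> pst Pp"

lemma Pp_nonneg: "Pp r k s \<ge> 0" using poc by (simp add: pOC_def)
lemma Pp_supp: "Pp r k s \<noteq> 0 \<Longrightarrow> k \<in> KK" using poc unfolding pOC_def KK_def by blast
lemma Pp_sum: "(\<Sum>s\<in>UNIV. \<Sum>k\<in>KK. Pp r k s) = 1"
proof -
  have "(\<Sum>k\<in>KK. \<Sum>s\<in>UNIV. Pp r k s) = 1" using poc by (simp add: pOC_def KK_def)
  then show ?thesis by (subst sum.swap) simp
qed

lemma tab_nonneg: "tab n c d \<ge> 0"
proof (induction n arbitrary: c)
  case 0 then show ?case by simp
next
  case (Suc n) then show ?case
    by (simp add: taboo_Suc' sum_nonneg Pp_nonneg)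
qed

lemma tab_zero_src: "snd c \<le> 0 \<Longrightarrow> tab (Suc n) c d = 0"
  by (simp add: taboo_Suc')

lemma pst_iff: "(x, y) \<in> P \<longleftrightarrow> snd x > 0 \<and> Pp (fst x) (snd y - snd x) (fst y) > 0"
  by (cases x; cases y) (simp add: pst_def)

lemma pst_KK: "(x, y) \<in> P \<Longrightarrow> snd y - snd x \<in> KK"
  using Pp_supp by (metis pst_iff less_irrefl)

lemma tab_reach: "tab n c d \<noteq> 0 \<Longrightarrow> (c, d) \<in> P ^^ n"
proof (induction n arbitrary: c)
  case 0 then show ?case by (simp split: if_splits)
next
  case (Suc n)
  then have pos: "snd c > 0" and ne: "(\<Sum>s\<in>UNIV. \<Sum>k\<in>KK. Pp (fst c) k s * tab n (s, snd c + k) d) \<noteq> 0"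
    by (auto simp: taboo_Suc' split: if_splits)
  from ne obtain s where "(\<Sum>k\<in>KK. Pp (fst c) k s * tab n (s, snd c + k) d) \<noteq> 0"
    by (meson sum.not_neutral_contains_not_neutral)
  then obtain k where "Pp (fst c) k s * tab n (s, snd c + k) d \<noteq> 0"
    by (meson sum.not_neutral_contains_not_neutral)
  then have a: "Pp (fst c) k s > 0" and b: "tab n (s, snd c + k) d \<noteq> 0"
    using Pp_nonneg[of "fst c" k s] by (auto simp: less_le)
  have "(c, (s, snd c + k)) \<in> P" using a pos by (simp add: pst_iff)
  then show ?case using Suc.IH[OF b] by (rule relpow_Suc_I2)
qed

lemma swap3: "(\<Sum>x\<in>A. \<Sum>s\<in>UNIV. \<Sum>k\<in>KK. Pp r k s * f s k x)
   = (\<Sum>s\<in>UNIV. \<Sum>k\<in>KK. Pp r k s * (\<Sum>x\<in>A. f s k x))"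
proof -
  have "(\<Sum>x\<in>A. \<Sum>s\<in>UNIV. \<Sum>k\<in>KK. Pp r k s * f s k x)
      = (\<Sum>s\<in>UNIV. \<Sum>x\<in>A. \<Sum>k\<in>KK. Pp r k s * f s k x)" by (rule sum.swap)
  also have "\<dots> = (\<Sum>s\<in>UNIV. \<Sum>k\<in>KK. \<Sum>x\<in>A. Pp r k s * f s k x)"
    by (rule sum.cong[OF refl], rule sum.swap)
  also have "\<dots> = (\<Sum>s\<in>UNIV. \<Sum>k\<in>KK. Pp r k s * (\<Sum>x\<in>A. f s k x))"
    by (simp add: sum_distrib_left)
  finally show ?thesis .
qed

lemma substoch:
  assumes "finite D" "t \<notin> D" "snd t \<le> 0"
  shows "(\<Sum>d\<in>D. tab n c d) + (\<Sum>k\<le>n. tab k c t) \<le> 1"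
proof (induction n arbitrary: c)
  case 0
  show ?case using assms(1,2) by (cases "c \<in> D") (auto simp: sum.delta')
next
  case (Suc n)
  show ?case
  proof (cases "snd c > 0")
    case False
    then have "(\<Sum>d\<in>D. tab (Suc n) c d) = 0" "(\<Sum>k\<le>n. tab (Suc k) c t) = 0"
      by (simp_all add: tab_zero_src)
    then show ?thesis by (simp add: sum.atMost_Suc_shift del: sum.atMost_Suc)
  next
    case True
    then have ct: "c \<noteq> t" using assms(3) by auto
    define X where "X s k = (\<Sum>d\<in>D. tab n (s, snd c + k) d) + (\<Sum>j\<le>n. tab j (s, snd c + k) t)" for s k
    have "(\<Sum>d\<in>D. tab (Suc n) c d) + (\<Sum>k\<le>Suc n. tab k c t)
        = (\<Sum>d\<in>D. tab (Suc n) c d) + (\<Sum>k\<le>n. tab (Suc k) c t)"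
      using ct by (simp add: sum.atMost_Suc_shift del: sum.atMost_Suc)
    also have "\<dots> = (\<Sum>s\<in>UNIV. \<Sum>k\<in>KK. Pp (fst c) k s * (\<Sum>d\<in>D. tab n (s, snd c + k) d))
        + (\<Sum>s\<in>UNIV. \<Sum>k\<in>KK. Pp (fst c) k s * (\<Sum>j\<le>n. tab j (s, snd c + k) t))"
      using True by (simp add: taboo_Suc' swap3[where f="\<lambda>s k d. tab n (s, snd c + k) d"]
          swap3[where f="\<lambda>s k j. tab j (s, snd c + k) t"])
    also have "\<dots> = (\<Sum>s\<in>UNIV. \<Sum>k\<in>KK. Pp (fst c) k s * X s k)"
      by (simp add: X_def sum.distrib distrib_left)
    also have "\<dots> \<le> (\<Sum>s\<in>UNIV. \<Sum>k\<in>KK. Pp (fst c) k s * 1)"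
      by (intro sum_mono mult_left_mono) (auto simp: X_def Pp_nonneg Suc.IH)
    also have "\<dots> = 1" using Pp_sum by simp
    finally show ?thesis .
  qed
qed

lemma CK:
  assumes "\<bar>snd c\<bar> + int m \<le> B"
  shows "tab (m + n) c e = (\<Sum>d\<in>UNIV \<times> {-B..B}. tab m c d * tab n d e)"
  using assms
proof (induction m arbitrary: c)
  case 0
  then have "c \<in> UNIV \<times> {-B..B}" by (cases c) auto
  have "(\<Sum>d\<in>UNIV \<times> {-B..B}. tab 0 c d * tab n d e) = (\<Sum>d\<in>UNIV \<times> {-B..B}. if c = d then tab n d e else 0)"
    by (intro sum.cong refl) simp
  then show ?case using \<open>c \<in> _\<close> by (simp add: sum.delta')
next
  case (Suc m)
  show ?case
  proof (cases "snd c > 0")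
    case False
    then show ?thesis by (simp add: tab_zero_src)
  next
    case True
    have IH: "tab (m + n) (s, snd c + k) e = (\<Sum>d\<in>UNIV \<times> {-B..B}. tab m (s, snd c + k) d * tab n d e)"
      if "k \<in> KK" for s k
      using that Suc.prems by (intro Suc.IH) (auto simp: KK_def)
    have "tab (Suc m + n) c e = (\<Sum>s\<in>UNIV. \<Sum>k\<in>KK. Pp (fst c) k s * tab (m + n) (s, snd c + k) e)"
      using True by (simp add: taboo_Suc')
    also have "\<dots> = (\<Sum>s\<in>UNIV. \<Sum>k\<in>KK. Pp (fst c) k s * (\<Sum>d\<in>UNIV \<times> {-B..B}. tab m (s, snd c + k) d * tab n d e))"
      by (intro sum.cong refl) (simp add: IH)
    also have "\<dots> = (\<Sum>d\<in>UNIV \<times> {-B..B}. \<Sum>s\<in>UNIV. \<Sum>k\<in>KK. Pp (fst c) k s * (tab m (s, snd c + k) d * tab n d e))"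
      by (rule swap3[symmetric])
    also have "\<dots> = (\<Sum>d\<in>UNIV \<times> {-B..B}. tab (Suc m) c d * tab n d e)"
      using True by (simp add: taboo_Suc' sum_distrib_right mult.assoc)
    finally show ?thesis .
  qed
qed

abbreviation "xm \<equiv> xmin P0 Pp"

lemma xset_finite: "finite ({P0 r c s | r c s. P0 r c s > 0} \<union> {Pp r c s | r c s. Pp r c s > 0})"
proof -
  have P0s: "P0 r c s \<noteq> 0 \<Longrightarrow> c \<in> {0,1}" for r c s using poc unfolding pOC_def by blast
  have "{P0 r c s | r c s. P0 r c s > 0} \<subseteq> (\<lambda>(r,c,s). P0 r c s) ` (UNIV \<times> {0,1} \<times> UNIV)"
  proof
    fix x assume "x \<in> {P0 r c s | r c s. P0 r c s > 0}"
    then obtain r c s where "x = P0 r c s" "P0 r c s > 0" by blast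
    then show "x \<in> (\<lambda>(r,c,s). P0 r c s) ` (UNIV \<times> {0,1} \<times> UNIV)"
      using P0s[of r c s] by (intro image_eqI[where x="(r,c,s)"]) auto
  qed
  moreover have "{Pp r c s | r c s. Pp r c s > 0} \<subseteq> (\<lambda>(r,c,s). Pp r c s) ` (UNIV \<times> KK \<times> UNIV)"
  proof
    fix x assume "x \<in> {Pp r c s | r c s. Pp r c s > 0}"
    then obtain r c s where "x = Pp r c s" "Pp r c s > 0" by blast
    then show "x \<in> (\<lambda>(r,c,s). Pp r c s) ` (UNIV \<times> KK \<times> UNIV)"
      using Pp_supp[of r c s] by (intro image_eqI[where x="(r,c,s)"]) auto
  qed
  moreover have "finite ((\<lambda>(r,c,s). P0 r c s) ` (UNIV \<times> {0::int,1} \<times> (UNIV::'q set)))" by simp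
  moreover have "finite ((\<lambda>(r,c,s). Pp r c s) ` (UNIV \<times> KK \<times> (UNIV::'q set)))" by simp
  ultimately show ?thesis by (meson finite_Un finite_subset)
qed

lemma exists_pos: "\<exists>r k s. Pp r k s > 0"
proof -
  obtain r :: 'q where True by simp
  have "(\<Sum>s\<in>UNIV. \<Sum>k\<in>KK. Pp r k s) \<noteq> 0" using Pp_sum by simp
  then obtain s k where "Pp r k s \<noteq> 0" by (meson sum.not_neutral_contains_not_neutral)
  then show ?thesis using Pp_nonneg[of r k s] by (auto simp: less_le)
qed

lemma Pp_le1: "Pp r k s \<le> 1"
proof (cases "k \<in> KK")
  case True
  have "Pp r k s \<le> (\<Sum>k\<in>KK. Pp r k s)" using True by (intro member_le_sum) (auto simp: Pp_nonneg)
  also have "\<dots> \<le> (\<Sum>s\<in>UNIV. \<Sum>k\<in>KK. Pp r k s)" by (intro member_le_sum) (auto simp: Pp_nonneg sum_nonneg)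
  finally show ?thesis using Pp_sum by simp
next
  case False then have "Pp r k s = 0" using Pp_supp by blast
  then show ?thesis by simp
qed

lemma xm_le: "Pp r k s > 0 \<Longrightarrow> xm \<le> Pp r k s"
  unfolding xmin_def by (rule Min_le[OF xset_finite]) blast

lemma xm_pos: "xm > 0"
proof -
  obtain r k s where "Pp r k s > 0" using exists_pos by blast
  then have ne: "({P0 r c s | r c s. P0 r c s > 0} \<union> {Pp r c s | r c s. Pp r c s > 0}) \<noteq> {}" by blast
  show ?thesis unfolding xmin_def using Min_in[OF xset_finite ne] by auto
qed

lemma xm_le1: "xm \<le> 1"
  using exists_pos xm_le Pp_le1 order_trans by blast

lemma tab_lower: "(c, d) \<in> P ^^ n \<Longrightarrow> tab n c d \<ge> xm ^ n"
proof (induction n arbitrary: c)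
  case 0 then show ?case by simp
next
  case (Suc n)
  from Suc.prems obtain y where cy: "(c, y) \<in> P" and yd: "(y, d) \<in> P ^^ n" by (rule relpow_Suc_E2)
  define k where "k = snd y - snd c"
  have pos: "snd c > 0" and pp: "Pp (fst c) k (fst y) > 0" using cy by (auto simp: pst_iff k_def)
  have kK: "k \<in> KK" using pst_KK[OF cy] by (simp add: k_def)
  have yeq: "(fst y, snd c + k) = y" by (simp add: k_def)
  have "xm ^ Suc n = xm * xm ^ n" by simp
  also have "\<dots> \<le> Pp (fst c) k (fst y) * tab n (fst y, snd c + k) d"
    using Suc.IH[OF yd] xm_le[OF pp] xm_pos yeq by (intro mult_mono) (auto simp: tab_nonneg)
  also have "\<dots> \<le> (\<Sum>k\<in>KK. Pp (fst c) k (fst y) * tab n (fst y, snd c + k) d)"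
    using kK by (intro member_le_sum) (auto simp: Pp_nonneg tab_nonneg)
  also have "\<dots> \<le> (\<Sum>s\<in>UNIV. \<Sum>k\<in>KK. Pp (fst c) k s * tab n (s, snd c + k) d)"
    by (intro member_le_sum[where f="\<lambda>s. \<Sum>k\<in>KK. Pp (fst c) k s * tab n (s, snd c + k) d"])
       (auto simp: Pp_nonneg tab_nonneg sum_nonneg)
  also have "\<dots> = tab (Suc n) c d" using pos by (simp add: taboo_Suc')
  finally show ?case .
qed

lemma P_shift: "(x, y) \<in> P\<^sup>* \<Longrightarrow> d \<ge> 0 \<Longrightarrow> ((fst x, snd x + d), (fst y, snd y + d)) \<in> P\<^sup>*"
proof (induction rule: rtrancl_induct)
  case base then show ?case by simp
next
  case (step y z)
  have "((fst y, snd y + d), (fst z, snd z + d)) \<in> P" using step.hyps(2) step.prems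
    by (simp add: pst_iff)
  then show ?case using step by (meson rtrancl.rtrancl_into_rtrancl)
qed

lemma P_pos_back: "(x, y) \<in> P\<^sup>* \<Longrightarrow> snd y > 0 \<Longrightarrow> snd x > 0"
  by (induction rule: converse_rtrancl_induct) (auto simp: pst_iff)

lemma P_step_bound: "(y, z) \<in> P \<Longrightarrow> snd z \<le> snd y + 1 \<and> snd y - 1 \<le> snd z"
  using pst_KK[of y z] by (auto simp: KK_def)

lemma up:
  assumes "(c0, y) \<in> P\<^sup>*" "snd c0 = 1"
  shows "snd y \<ge> 1 \<longrightarrow> (\<exists>u::int \<Rightarrow> 'q. u (snd y) = fst y \<and>
     (\<forall>l. 1 \<le> l \<and> l \<le> snd y \<longrightarrow> (c0, (u l, l)) \<in> P\<^sup>*) \<and>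
     (\<forall>l l'. 1 \<le> l \<and> l \<le> l' \<and> l' \<le> snd y \<longrightarrow> ((u l, l), (u l', l')) \<in> P\<^sup>*))"
  using assms(1)
proof (induction rule: rtrancl_induct)
  case base
  have c0: "c0 = (fst c0, 1)" using assms(2) by (simp add: prod_eq_iff)
  show ?case
  proof (intro impI exI[where x="\<lambda>_. fst c0"] conjI allI impI)
    fix l assume "1 \<le> l \<and> l \<le> snd c0"
    then have "l = 1" using assms(2) by simp
    then show "(c0, (fst c0, l)) \<in> P\<^sup>*" using c0 by (metis rtrancl.rtrancl_refl)
  next
    fix l l' :: int assume "1 \<le> l \<and> l \<le> l' \<and> l' \<le> snd c0"
    then have "l = l'" using assms(2) by simp
    then show "((fst c0, l), (fst c0, l')) \<in> P\<^sup>*" by simp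
  qed simp
next
  case (step y z)
  show ?case
  proof
    assume kz: "snd z \<ge> 1"
    have j1: "snd y \<ge> 1" using step.hyps(2) by (simp add: pst_iff)
    then obtain u where u1: "u (snd y) = fst y"
      and u2: "\<forall>l. 1 \<le> l \<and> l \<le> snd y \<longrightarrow> (c0, (u l, l)) \<in> P\<^sup>*"
      and u3: "\<forall>l l'. 1 \<le> l \<and> l \<le> l' \<and> l' \<le> snd y \<longrightarrow> ((u l, l), (u l', l')) \<in> P\<^sup>*"
      using step.IH by blast
    have bd: "snd z \<le> snd y + 1" "snd y - 1 \<le> snd z" using P_step_bound[OF step.hyps(2)] by auto
    have yz: "(y, (fst z, snd z)) \<in> P" using step.hyps(2) by simp
    have yu: "y = (u (snd y), snd y)" using u1 by (simp add: prod_eq_iff)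
    define u' where "u' = u(snd z := fst z)"
    have A: "(c0, (u' l, l)) \<in> P\<^sup>*" if "1 \<le> l" "l \<le> snd z" for l
    proof (cases "l = snd z")
      case True then show ?thesis using step.hyps by (simp add: u'_def)
    next
      case False then show ?thesis using u2 that bd by (simp add: u'_def)
    qed
    have B: "((u' l, l), (u' l', l')) \<in> P\<^sup>*" if "1 \<le> l" "l \<le> l'" "l' \<le> snd z" for l l'
    proof (cases "l' = snd z")
      case True
      show ?thesis
      proof (cases "l = snd z")
        case True then show ?thesis using \<open>l' = snd z\<close> by simp
      next
        case False
        then have "l \<le> snd y" using that bd True by auto
        then have "((u l, l), (u (snd y), snd y)) \<in> P\<^sup>*" using u3 that(1) by simp
        then have "((u l, l), y) \<in> P\<^sup>*" using yu by simp
        then have "((u l, l), (fst z, snd z)) \<in> P\<^sup>*" using yz by (meson rtrancl.rtrancl_into_rtrancl)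
        then show ?thesis using True False by (simp add: u'_def)
      qed
    next
      case False
      then show ?thesis using u3 that bd by (simp add: u'_def)
    qed
    show "\<exists>u::int \<Rightarrow> 'q. u (snd z) = fst z \<and>
     (\<forall>l. 1 \<le> l \<and> l \<le> snd z \<longrightarrow> (c0, (u l, l)) \<in> P\<^sup>*) \<and>
     (\<forall>l l'. 1 \<le> l \<and> l \<le> l' \<and> l' \<le> snd z \<longrightarrow> ((u l, l), (u l', l')) \<in> P\<^sup>*)"
      using A B by (intro exI[where x=u']) (auto simp: u'_def)
  qed
qed

lemma down:
  assumes "(y, t) \<in> P\<^sup>*" "snd t = 0"
  shows "snd y \<ge> 1 \<longrightarrow> (\<exists>v::int \<Rightarrow> 'q. v (snd y) = fst y \<and>
     (\<forall>l. 1 \<le> l \<and> l \<le> snd y \<longrightarrow> ((v l, l), t) \<in> P\<^sup>*) \<and>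
     (\<forall>l l'. 1 \<le> l \<and> l \<le> l' \<and> l' \<le> snd y \<longrightarrow> ((v l', l'), (v l, l)) \<in> P\<^sup>*))"
  using assms(1)
proof (induction rule: converse_rtrancl_induct)
  case base
  show ?case using assms(2) by simp
next
  case (step y z)
  show ?case
  proof
    assume j1: "snd y \<ge> 1"
    obtain v where v: "snd z \<ge> 1 \<longrightarrow> (v (snd z) = fst z \<and>
     (\<forall>l. 1 \<le> l \<and> l \<le> snd z \<longrightarrow> ((v l, l), t) \<in> P\<^sup>*) \<and>
     (\<forall>l l'. 1 \<le> l \<and> l \<le> l' \<and> l' \<le> snd z \<longrightarrow> ((v l', l'), (v l, l)) \<in> P\<^sup>*))"
      using step.IH by blast
    have bd: "snd z \<le> snd y + 1" "snd y - 1 \<le> snd z" using P_step_bound[OF step.hyps(1)] by auto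
    have yz: "(y, (fst z, snd z)) \<in> P" using step.hyps(1) by simp
    define v' where "v' = v(snd y := fst y)"
    have A: "((v' l, l), t) \<in> P\<^sup>*" if "1 \<le> l" "l \<le> snd y" for l
    proof (cases "l = snd y")
      case True then show ?thesis using step.hyps by (simp add: v'_def)
    next
      case False then show ?thesis using v that bd by (simp add: v'_def)
    qed
    have B: "((v' l', l'), (v' l, l)) \<in> P\<^sup>*" if "1 \<le> l" "l \<le> l'" "l' \<le> snd y" for l l'
    proof (cases "l' = snd y")
      case True
      show ?thesis
      proof (cases "l = snd y")
        case True then show ?thesis using \<open>l' = snd y\<close> by simp
      next
        case False
        then have z1: "snd z \<ge> 1" "l \<le> snd z" using that bd True by auto
        then have zu: "(fst z, snd z) = (v (snd z), snd z)" using v by simp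
        have vv: "\<forall>l l'. 1 \<le> l \<and> l \<le> l' \<and> l' \<le> snd z \<longrightarrow> ((v l', l'), (v l, l)) \<in> P\<^sup>*"
          using v z1(1) by simp
        have "((v (snd z), snd z), (v l, l)) \<in> P\<^sup>*" using vv z1 that(1) by simp
        then have "(y, (v l, l)) \<in> P\<^sup>*" using yz zu by (metis converse_rtrancl_into_rtrancl)
        then show ?thesis using True False by (simp add: v'_def prod_eq_iff)
      qed
    next
      case False
      then show ?thesis using v that bd by (simp add: v'_def)
    qed
    show "\<exists>v::int \<Rightarrow> 'q. v (snd y) = fst y \<and>
     (\<forall>l. 1 \<le> l \<and> l \<le> snd y \<longrightarrow> ((v l, l), t) \<in> P\<^sup>*) \<and>
     (\<forall>l l'. 1 \<le> l \<and> l \<le> l' \<and> l' \<le> snd y \<longrightarrow> ((v l', l'), (v l, l)) \<in> P\<^sup>*)"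
      using A B by (intro exI[where x=v']) (auto simp: v'_def)
  qed
qed

lemma pump:
  assumes h1: "(c0, (s, a)) \<in> P\<^sup>*" and h2: "((s, a), (s, b)) \<in> P\<^sup>*"
    and h3: "((s, b), (t', b)) \<in> P\<^sup>*" and h4: "((t', b), (t', a)) \<in> P\<^sup>*"
    and h5: "((t', a), tt) \<in> P\<^sup>*" and ab: "a < b"
  shows "(c0, (s, a + int k * (b - a))) \<in> P\<^sup>* \<and> ((s, a + int k * (b - a)), tt) \<in> P\<^sup>*"
proof -
  have eq: "b + int k * (b - a) = a + int (Suc k) * (b - a)" for k by (simp add: algebra_simps)
  have U: "((s, a), (s, a + int k * (b - a))) \<in> P\<^sup>*" for k
  proof (induction k)
    case 0 then show ?case by simp
  next
    case (Suc k)
    have "((s, a + int k * (b - a)), (s, b + int k * (b - a))) \<in> P\<^sup>*"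
      using P_shift[OF h2, of "int k * (b - a)"] ab by simp
    then show ?case using Suc.IH eq by (metis rtrancl_trans)
  qed
  have C: "((t', a + int k * (b - a)), (t', a)) \<in> P\<^sup>*" for k
  proof (induction k)
    case 0 then show ?case by simp
  next
    case (Suc k)
    have "((t', b + int k * (b - a)), (t', a + int k * (b - a))) \<in> P\<^sup>*"
      using P_shift[OF h4, of "int k * (b - a)"] ab by simp
    then show ?case using Suc.IH eq by (metis rtrancl_trans)
  qed
  have M: "((s, a + int k * (b - a)), (t', a + int k * (b - a))) \<in> P\<^sup>*"
  proof (cases k)
    case 0
    have "((s, a), (t', a)) \<in> P\<^sup>*" using h2 h3 h4 by (meson rtrancl_trans)
    then show ?thesis using 0 by simp
  next
    case (Suc k')
    have "((s, b + int k' * (b - a)), (t', b + int k' * (b - a))) \<in> P\<^sup>*"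
      using P_shift[OF h3, of "int k' * (b - a)"] ab by simp
    then show ?thesis using Suc eq by metis
  qed
  show ?thesis using h1 U[of k] M C[of k] h5 by (meson rtrancl_trans)
qed

end

locale poc2 = poc P0 Pp for P0 Pp :: "'q::finite \<Rightarrow> int \<Rightarrow> 'q \<Rightarrow> real" +
  fixes p q :: 'q
  assumes fin: "finite (Pre_star P0 Pp {(q, 0)} \<inter> Post_star P0 Pp {(p, 1)})"
begin

abbreviation "c0 \<equiv> (p, 1::int)"
abbreviation "tt \<equiv> (q, 0::int)"
definition "R = {d. snd d > 0 \<and> (c0, d) \<in> P\<^sup>* \<and> (d, tt) \<in> P\<^sup>*}"

lemma P_step: "P\<^sup>* \<subseteq> (step P0 Pp)\<^sup>*"
proof -
  have "P \<subseteq> step P0 Pp" by (auto simp: pst_def step_def)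
  then show ?thesis by (rule rtrancl_mono)
qed

lemma reach_in: "(c0, d) \<in> P\<^sup>* \<Longrightarrow> (d, tt) \<in> P\<^sup>* \<Longrightarrow> d \<in> Pre_star P0 Pp {tt} \<inter> Post_star P0 Pp {c0}"
  using P_step by (auto simp: Pre_star_def Post_star_def)

lemma finite_R: "finite R"
  by (rule finite_subset[OF _ fin]) (auto simp: R_def dest: reach_in)

lemma height: assumes "d \<in> R" shows "snd d \<le> int (card (UNIV :: 'q set)) ^ 2"
proof (rule ccontr)
  assume "\<not> ?thesis"
  then have big: "snd d > int (card (UNIV :: 'q set)) ^ 2" by simp
  have d: "snd d > 0" "(c0, d) \<in> P\<^sup>*" "(d, tt) \<in> P\<^sup>*" using assms by (auto simp: R_def)
  obtain u where u1: "u (snd d) = fst d"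
      and u2: "\<forall>l. 1 \<le> l \<and> l \<le> snd d \<longrightarrow> (c0, (u l, l)) \<in> P\<^sup>*"
      and u3: "\<forall>l l'. 1 \<le> l \<and> l \<le> l' \<and> l' \<le> snd d \<longrightarrow> ((u l, l), (u l', l')) \<in> P\<^sup>*"
    using up[OF d(2)] d(1) by auto
  obtain v where v1: "v (snd d) = fst d"
      and v2: "\<forall>l. 1 \<le> l \<and> l \<le> snd d \<longrightarrow> ((v l, l), tt) \<in> P\<^sup>*"
      and v3: "\<forall>l l'. 1 \<le> l \<and> l \<le> l' \<and> l' \<le> snd d \<longrightarrow> ((v l', l'), (v l, l)) \<in> P\<^sup>*"
    using down[OF d(3)] d(1) by auto
  define w where "w l = (u l, v l)" for l
  have "\<not> inj_on w {1..snd d}"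
  proof
    assume inj: "inj_on w {1..snd d}"
    have "card (w ` {1..snd d}) = card {1..snd d}" using card_image[OF inj] .
    also have "\<dots> = nat (snd d)" by simp
    finally have "nat (snd d) \<le> card (UNIV :: ('q \<times> 'q) set)"
      by (metis card_mono finite_UNIV subset_UNIV)
    then have "nat (snd d) \<le> card (UNIV :: 'q set) ^ 2" by (simp add: card_cartesian_product power2_eq_square flip: UNIV_Times_UNIV)
    then have "int (nat (snd d)) \<le> int (card (UNIV :: 'q set) ^ 2)" by linarith
    then show False using big d(1) by simp
  qed
  then obtain a b where ab: "a \<in> {1..snd d}" "b \<in> {1..snd d}" "a < b" "w a = w b"
    unfolding inj_on_def by (metis linorder_neq_iff)
  define s where "s = u a"
  define t' where "t' = v a"
  have sb: "u b = s" "v b = t'" using ab(4) by (auto simp: w_def s_def t'_def)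
  have h1: "(c0, (s, a)) \<in> P\<^sup>*" using u2 ab by (simp add: s_def)
  have "((u a, a), (u b, b)) \<in> P\<^sup>*" using u3 ab(1-3) by simp
  then have h2: "((s, a), (s, b)) \<in> P\<^sup>*" using sb by (simp add: s_def)
  have dd: "d = (u (snd d), snd d)" "d = (v (snd d), snd d)" using u1 v1 by (auto simp: prod_eq_iff)
  have "((s, b), d) \<in> P\<^sup>*" using u3 ab sb dd(1) by (metis atLeastAtMost_iff order_refl)
  moreover have "(d, (t', b)) \<in> P\<^sup>*" using v3 ab sb dd(2) by (metis atLeastAtMost_iff order_refl)
  ultimately have h3: "((s, b), (t', b)) \<in> P\<^sup>*" by (meson rtrancl_trans)
  have "((v b, b), (v a, a)) \<in> P\<^sup>*" using v3 ab(1-3) by simp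
  then have h4: "((t', b), (t', a)) \<in> P\<^sup>*" using sb by (simp add: t'_def)
  have h5: "((t', a), tt) \<in> P\<^sup>*" using v2 ab by (simp add: t'_def)
  define f where "f k = (s, a + int k * (b - a))" for k
  have "f ` UNIV \<subseteq> Pre_star P0 Pp {tt} \<inter> Post_star P0 Pp {c0}"
    using pump[OF h1 h2 h3 h4 h5 ab(3)] reach_in by (auto simp: f_def)
  moreover have "inj f" using ab(3) by (auto simp: inj_def f_def)
  ultimately have "finite (UNIV :: nat set)" using fin by (meson finite_imageD finite_subset)
  then show False by simp
qed


lemma R_sub: "R \<subseteq> UNIV \<times> {1..int (card (UNIV :: 'q set)) ^ 2}"
proof
  fix d assume "d \<in> R"
  then show "d \<in> UNIV \<times> {1..int (card (UNIV :: 'q set)) ^ 2}" using height[of d] by (cases d) (auto simp: R_def)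
qed

lemma card_R: "card R \<le> card (UNIV :: 'q set) ^ 3"
proof -
  have fin: "finite (UNIV \<times> {1..int (card (UNIV :: 'q set)) ^ 2} :: ('q \<times> int) set)"
    by (intro finite_cartesian_product) auto
  have "card R \<le> card (UNIV \<times> {1..int (card (UNIV :: 'q set)) ^ 2} :: ('q \<times> int) set)" by (rule card_mono[OF fin R_sub])
  also have "\<dots> = card (UNIV :: 'q set) * nat (int (card (UNIV :: 'q set)) ^ 2)" by (simp add: card_cartesian_product)
  also have "\<dots> = card (UNIV :: 'q set) ^ 3" by (simp add: power2_eq_square power3_eq_cube flip: of_nat_mult)
  finally show ?thesis .
qed

lemma relpow_path: assumes "\<forall>i<k. (f i, f (Suc i)) \<in> P" "i \<le> j" "j \<le> k"
  shows "(f i, f j) \<in> P ^^ (j - i)"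
  using assms(2,3)
proof (induction j)
  case 0 then show ?case by simp
next
  case (Suc j)
  show ?case
  proof (cases "i = Suc j")
    case True then show ?thesis by simp
  next
    case False
    then have "(f i, f j) \<in> P ^^ (j - i)" using Suc by simp
    moreover have "(f j, f (Suc j)) \<in> P" using assms(1) Suc.prems by simp
    ultimately have "(f i, f (Suc j)) \<in> P ^^ Suc (j - i)" by (rule relpow_Suc_I)
    moreover have "Suc (j - i) = Suc j - i" using False Suc.prems by simp
    ultimately show ?thesis by simp
  qed
qed

lemma shortest: assumes "c \<in> R" shows "\<exists>k \<le> card R. (c, tt) \<in> P ^^ k"
proof -
  have "(c, tt) \<in> P\<^sup>*" using assms by (simp add: R_def)
  then obtain k0 where "(c, tt) \<in> P ^^ k0" using rtrancl_power by blast
  then obtain k where kP: "(c, tt) \<in> P ^^ k" and kmin: "\<And>k'. k' < k \<Longrightarrow> (c, tt) \<notin> P ^^ k'"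
    using exists_least_iff[of "\<lambda>k. (c, tt) \<in> P ^^ k"] by blast
  show ?thesis
  proof (rule ccontr)
    assume "\<not> ?thesis"
    then have big: "k > card R" using kP not_le by blast
    obtain f where f0: "f 0 = c" and fk: "f k = tt" and fs: "\<forall>i<k. (f i, f (Suc i)) \<in> P"
      using kP relpow_fun_conv by metis
    have fR: "f i \<in> R" if "i < k" for i
    proof -
      have "(f 0, f i) \<in> P ^^ (i - 0)" using relpow_path[OF fs, of 0 i] that by simp
      then have "(c, f i) \<in> P\<^sup>*" using f0 relpow_imp_rtrancl by auto
      then have "(c0, f i) \<in> P\<^sup>*" using assms by (auto simp: R_def)
      moreover have "(f i, tt) \<in> P\<^sup>*" using relpow_path[OF fs, of i k] that fk relpow_imp_rtrancl by auto
      moreover have "snd (f i) > 0" using fs that by (auto simp: pst_iff)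
      ultimately show ?thesis by (simp add: R_def)
    qed
    have "\<not> inj_on f {..<k}"
    proof
      assume "inj_on f {..<k}"
      then have "card (f ` {..<k}) = k" by (simp add: card_image)
      moreover have "f ` {..<k} \<subseteq> R" using fR by auto
      ultimately have "k \<le> card R" using finite_R by (metis card_mono)
      then show False using big by simp
    qed
    then obtain i j where ij: "i < j" "j < k" "f i = f j"
      unfolding inj_on_def by (metis lessThan_iff linorder_neq_iff)
    have "(f 0, f i) \<in> P ^^ (i - 0)" using relpow_path[OF fs, of 0 i] ij by simp
    moreover have "(f j, f k) \<in> P ^^ (k - j)" using relpow_path[OF fs, of j k] ij by simp
    ultimately have "(c, tt) \<in> P ^^ i O P ^^ (k - j)" using f0 fk ij by auto
    then have "(c, tt) \<in> P ^^ (i + (k - j))" by (simp add: relpow_add)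
    moreover have "i + (k - j) < k" using ij by simp
    ultimately show False using kmin by blast
  qed
qed

lemma CKR:
  assumes "(c0, c) \<in> P\<^sup>*" "(e, tt) \<in> P\<^sup>*" "n > 0 \<or> e \<in> R"
  shows "tab (m + n) c e = (\<Sum>d\<in>R. tab m c d * tab n d e)"
proof -
  define B where "B = \<bar>snd c\<bar> + int m + int (card (UNIV :: 'q set)) ^ 2"
  have "tab (m + n) c e = (\<Sum>d\<in>UNIV \<times> {-B..B}. tab m c d * tab n d e)"
    by (rule CK) (simp add: B_def)
  also have "\<dots> = (\<Sum>d\<in>R. tab m c d * tab n d e)"
  proof (rule sum.mono_neutral_right)
    show "finite (UNIV \<times> {-B..B} :: ('q \<times> int) set)" by (intro finite_cartesian_product) auto
    show "R \<subseteq> UNIV \<times> {-B..B}"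
    proof
      fix d assume "d \<in> R"
      then have "d \<in> UNIV \<times> {1..int (card (UNIV :: 'q set)) ^ 2}" using R_sub by blast
      then show "d \<in> UNIV \<times> {-B..B}" by (cases d) (auto simp: B_def)
    qed
    show "\<forall>d\<in>UNIV \<times> {-B..B} - R. tab m c d * tab n d e = 0"
    proof (intro ballI, rule ccontr)
      fix d assume dn: "d \<in> UNIV \<times> {-B..B} - R" and ne: "tab m c d * tab n d e \<noteq> 0"
      then have a: "(c, d) \<in> P ^^ m" and b: "(d, e) \<in> P ^^ n" using tab_reach by auto
      have c0d: "(c0, d) \<in> P\<^sup>*" using assms(1) a relpow_imp_rtrancl by (meson rtrancl_trans)
      have dt: "(d, tt) \<in> P\<^sup>*" using assms(2) b relpow_imp_rtrancl by (meson rtrancl_trans)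
      have "snd d > 0"
      proof (cases n)
        case 0 then have "e \<in> R" "d = e" using assms(3) b by auto
        then show ?thesis by (simp add: R_def)
      next
        case (Suc n') then obtain y where "(d, y) \<in> P" using b by (meson relpow_Suc_E2)
        then show ?thesis by (simp add: pst_iff)
      qed
      then have "d \<in> R" using c0d dt by (simp add: R_def)
      then show False using dn by simp
    qed
  qed
  finally show ?thesis .
qed

definition "Bf n c = (\<Sum>d\<in>R. tab n c d)"

lemma Bf_nonneg: "Bf n c \<ge> 0" by (simp add: Bf_def sum_nonneg tab_nonneg)

lemma Bf_le1: "Bf n c \<le> 1"
proof -
  have "tt \<notin> R" by (simp add: R_def)
  then have "Bf n c + (\<Sum>k\<le>n. tab k c tt) \<le> 1" unfolding Bf_def by (intro substoch finite_R) auto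
  moreover have "(\<Sum>k\<le>n. tab k c tt) \<ge> 0" by (simp add: sum_nonneg tab_nonneg)
  ultimately show ?thesis by simp
qed

lemma splitB: assumes "c \<in> R" shows "Bf (m + n) c = (\<Sum>d\<in>R. tab m c d * Bf n d)"
proof -
  have "Bf (m + n) c = (\<Sum>e\<in>R. \<Sum>d\<in>R. tab m c d * tab n d e)"
    unfolding Bf_def using assms by (intro sum.cong refl CKR) (auto simp: R_def)
  also have "\<dots> = (\<Sum>d\<in>R. tab m c d * Bf n d)"
    by (subst sum.swap) (simp add: Bf_def sum_distrib_left)
  finally show ?thesis .
qed

abbreviation "mR \<equiv> card R"
abbreviation "yy \<equiv> xm ^ mR"

lemma hit: assumes "c \<in> R" shows "yy \<le> (\<Sum>k\<le>mR. tab k c tt)"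
proof -
  obtain k where k: "k \<le> mR" "(c, tt) \<in> P ^^ k" using shortest[OF assms] by blast
  have "yy \<le> xm ^ k" using k(1) xm_pos xm_le1 by (simp add: power_decreasing)
  also have "\<dots> \<le> tab k c tt" using tab_lower[OF k(2)] .
  also have "\<dots> \<le> (\<Sum>k\<le>mR. tab k c tt)" using k(1) by (intro member_le_sum) (auto simp: tab_nonneg)
  finally show ?thesis .
qed

lemma stay: assumes "c \<in> R" shows "Bf mR c \<le> 1 - yy"
proof -
  have "tt \<notin> R" by (simp add: R_def)
  then have "Bf mR c + (\<Sum>k\<le>mR. tab k c tt) \<le> 1" unfolding Bf_def by (intro substoch finite_R) auto
  then show ?thesis using hit[OF assms] by simp
qed

lemma decay: assumes "c \<in> R" shows "Bf n c \<le> (1 - yy) ^ (n div mR)"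
  using assms
proof (induction n arbitrary: c rule: less_induct)
  case (less n)
  have m1: "mR \<ge> 1" using less.prems finite_R by (metis One_nat_def Suc_leI card_gt_0_iff empty_iff)
  have y1: "1 - yy \<ge> 0" using stay[OF less.prems] Bf_nonneg[of mR c] by simp
  show ?case
  proof (cases "n < mR")
    case True then show ?thesis using Bf_le1 by simp
  next
    case False
    then have nn: "n = mR + (n - mR)" by simp
    have IH: "Bf (n - mR) d \<le> (1 - yy) ^ ((n - mR) div mR)" if "d \<in> R" for d
      using less.IH[OF _ that] m1 False by simp
    have "Bf n c = (\<Sum>d\<in>R. tab mR c d * Bf (n - mR) d)" using splitB[OF less.prems] nn by metis
    also have "\<dots> \<le> (\<Sum>d\<in>R. tab mR c d * (1 - yy) ^ ((n - mR) div mR))"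
      by (intro sum_mono mult_left_mono IH tab_nonneg)
    also have "\<dots> = Bf mR c * (1 - yy) ^ ((n - mR) div mR)" by (simp add: Bf_def sum_distrib_right)
    also have "\<dots> \<le> (1 - yy) * (1 - yy) ^ ((n - mR) div mR)"
      using stay[OF less.prems] y1 by (intro mult_right_mono) auto
    also have "\<dots> = (1 - yy) ^ (n div mR)"
    proof -
      have "n div mR = (mR + (n - mR)) div mR" using nn by metis
      also have "\<dots> = Suc ((n - mR) div mR)" using m1 by simp
      finally have "n div mR = Suc ((n - mR) div mR)" .
      then show ?thesis by simp
    qed
    finally show ?thesis .
  qed
qed

abbreviation "aa n \<equiv> tab n c0 tt"

lemma tail: "(\<Sum>k<K. aa (Suc (j + k))) \<le> Bf j c0"
proof -
  have "(\<Sum>k<K. aa (Suc (j + k))) = (\<Sum>k<K. \<Sum>d\<in>R. tab j c0 d * tab (Suc k) d tt)"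
  proof (intro sum.cong refl)
    fix k
    have "aa (Suc (j + k)) = tab (j + Suc k) c0 tt" by simp
    also have "\<dots> = (\<Sum>d\<in>R. tab j c0 d * tab (Suc k) d tt)"
      by (rule CKR) auto
    finally show "aa (Suc (j + k)) = (\<Sum>d\<in>R. tab j c0 d * tab (Suc k) d tt)" .
  qed
  also have "\<dots> = (\<Sum>d\<in>R. tab j c0 d * (\<Sum>k<K. tab (Suc k) d tt))"
    by (subst sum.swap) (simp add: sum_distrib_left)
  also have "\<dots> \<le> (\<Sum>d\<in>R. tab j c0 d * 1)"
  proof (intro sum_mono mult_left_mono tab_nonneg)
    fix d
    have "(\<Sum>k<K. tab (Suc k) d tt) \<le> tab 0 d tt + (\<Sum>k<K. tab (Suc k) d tt)"
      by (simp add: tab_nonneg)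
    also have "\<dots> = (\<Sum>k<Suc K. tab k d tt)" by (rule sum.lessThan_Suc_shift[symmetric])
    also have "\<dots> = (\<Sum>k\<le>K. tab k d tt)" by (simp add: lessThan_Suc_atMost)
    also have "\<dots> \<le> 1" using substoch[of "{}" tt K d] by simp
    finally show "(\<Sum>k<K. tab (Suc k) d tt) \<le> 1" .
  qed
  finally show ?thesis by (simp add: Bf_def)
qed

lemma swap_id: "(\<Sum>n<N. real n * f n) = (\<Sum>j<N. \<Sum>k<N - Suc j. f (Suc (j + k)))"
proof (induction N)
  case 0 then show ?case by simp
next
  case (Suc N)
  have a: "(\<Sum>k<Suc N - Suc j. f (Suc (j + k))) = (\<Sum>k<N - Suc j. f (Suc (j + k))) + f N" if "j < N" for j
  proof -
    have "Suc N - Suc j = Suc (N - Suc j)" using that by simp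
    moreover have "Suc (j + (N - Suc j)) = N" using that by simp
    ultimately show ?thesis by simp
  qed
  have "(\<Sum>j<Suc N. \<Sum>k<Suc N - Suc j. f (Suc (j + k)))
      = (\<Sum>j<N. \<Sum>k<Suc N - Suc j. f (Suc (j + k)))" by simp
  also have "\<dots> = (\<Sum>j<N. (\<Sum>k<N - Suc j. f (Suc (j + k))) + f N)"
    by (intro sum.cong refl a) simp
  also have "\<dots> = (\<Sum>j<N. \<Sum>k<N - Suc j. f (Suc (j + k))) + real N * f N"
    by (simp add: sum.distrib)
  finally show ?case using Suc.IH by simp
qed

lemma geo_div: assumes "0 \<le> x" "x < 1" "m \<ge> 1"
  shows "(\<Sum>j<N. x ^ (j div m)) \<le> real m / (1 - x)"
proof -
  have split: "(\<Sum>j<a + i. g j) = (\<Sum>j<a. g j) + (\<Sum>l<i. g (a + l))" for a i and g :: "nat \<Rightarrow> real"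
    by (induction i) auto
  have blk: "(\<Sum>j<m * K. x ^ (j div m)) = real m * (\<Sum>q<K. x ^ q)" for K
  proof (induction K)
    case 0 then show ?case by simp
  next
    case (Suc K)
    have "(\<Sum>j<m * Suc K. x ^ (j div m)) = (\<Sum>j<m * K + m. x ^ (j div m))" by (simp add: algebra_simps)
    also have "\<dots> = (\<Sum>j<m * K. x ^ (j div m)) + (\<Sum>l<m. x ^ ((m * K + l) div m))" by (rule split)
    also have "(\<Sum>l<m. x ^ ((m * K + l) div m)) = (\<Sum>l<m. x ^ K)"
      using assms(3) by (intro sum.cong refl) simp
    finally show ?case using Suc.IH by (simp add: algebra_simps)
  qed
  have "(\<Sum>j<N. x ^ (j div m)) \<le> (\<Sum>j<m * N. x ^ (j div m))"
    using assms by (intro sum_mono2) auto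
  also have "\<dots> = real m * (\<Sum>q<N. x ^ q)" by (rule blk)
  also have "(\<Sum>q<N. x ^ q) = (1 - x ^ N) / (1 - x)" using assms by (simp add: sum_gp_strict)
  also have "\<dots> \<le> 1 / (1 - x)" using assms by (intro divide_right_mono) auto
  finally show ?thesis using assms by (simp add: mult_left_mono)
qed


lemma final:
  assumes pd: "pdown P0 Pp p q > 0"
  shows "summable (\<lambda>n. real n * aa n) \<and>
    Edown P0 Pp p q \<le> 15 * real (card (UNIV :: 'q set)) ^ 3 / xm ^ (4 * card (UNIV :: 'q set) ^ 3)"
proof -
  have apart: "(\<Sum>k<N. aa k) \<le> 1" for N
  proof -
    have "(\<Sum>k<N. aa k) \<le> (\<Sum>k\<le>N. aa k)" by (intro sum_mono2) (auto simp: tab_nonneg)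
    also have "\<dots> \<le> 1" using substoch[of "{}" tt N c0] by simp
    finally show ?thesis .
  qed
  have asum: "summable aa" by (rule summableI_nonneg_bounded[OF tab_nonneg apart])
  have c0R: "c0 \<in> R"
  proof (rule ccontr)
    assume nR: "c0 \<notin> R"
    have "aa n = 0" for n
    proof (rule ccontr)
      assume "aa n \<noteq> 0"
      then have "(c0, tt) \<in> P\<^sup>*" using tab_reach relpow_imp_rtrancl by blast
      then show False using nR by (simp add: R_def)
    qed
    then have "pdown P0 Pp p q = 0" by (simp add: pdown_def)
    then show False using pd by simp
  qed
  have m1: "mR \<ge> 1" using c0R finite_R by (metis One_nat_def Suc_leI card_gt_0_iff empty_iff)
  have ypos: "yy > 0" using xm_pos by simp
  have "yy \<le> (\<Sum>k\<le>mR. aa k)" by (rule hit[OF c0R])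
  also have "\<dots> \<le> pdown P0 Pp p q" unfolding pdown_def
    by (intro sum_le_suminf asum) (auto simp: tab_nonneg)
  finally have ypd: "yy \<le> pdown P0 Pp p q" .
  have y1: "yy \<le> 1" using xm_pos xm_le1 by (simp add: power_le_one)
  have part: "(\<Sum>n<N. real n * aa n) \<le> real mR / yy" for N
  proof -
    have "(\<Sum>n<N. real n * aa n) = (\<Sum>j<N. \<Sum>k<N - Suc j. aa (Suc (j + k)))" by (rule swap_id)
    also have "\<dots> \<le> (\<Sum>j<N. Bf j c0)" by (intro sum_mono tail)
    also have "\<dots> \<le> (\<Sum>j<N. (1 - yy) ^ (j div mR))" by (intro sum_mono decay c0R)
    also have "\<dots> \<le> real mR / (1 - (1 - yy))" using ypos y1 m1 by (intro geo_div) auto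
    finally show ?thesis by simp
  qed
  have S: "summable (\<lambda>n. real n * aa n)"
    by (rule summableI_nonneg_bounded[OF _ part]) (simp add: tab_nonneg)
  have Sle: "(\<Sum>n. real n * aa n) \<le> real mR / yy" by (rule suminf_le_const[OF S part])
  have S0: "(\<Sum>n. real n * aa n) \<ge> 0" by (intro suminf_nonneg S) (simp add: tab_nonneg)
  have "Edown P0 Pp p q = (\<Sum>n. real n * aa n) / pdown P0 Pp p q" by (simp add: Edown_def)
  also have "\<dots> \<le> (real mR / yy) / yy"
    using Sle S0 ypd ypos by (intro frac_le) auto
  also have "\<dots> = real mR / xm ^ (2 * mR)" by (simp add: power_mult power2_eq_square mult_2 power_add)
  also have "\<dots> \<le> real (card (UNIV :: 'q set)) ^ 3 / xm ^ (4 * card (UNIV :: 'q set) ^ 3)"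
  proof (intro frac_le)
    show "real mR \<le> real (card (UNIV :: 'q set)) ^ 3" using card_R by (metis of_nat_le_iff of_nat_power)
    show "xm ^ (4 * card (UNIV :: 'q set) ^ 3) \<le> xm ^ (2 * mR)"
      using card_R xm_pos xm_le1 by (intro power_decreasing) auto
  qed (use xm_pos in auto)
  also have "\<dots> \<le> 15 * real (card (UNIV :: 'q set)) ^ 3 / xm ^ (4 * card (UNIV :: 'q set) ^ 3)"
    using xm_pos by (intro divide_right_mono) auto
  finally show ?thesis using S by simp
qed

end

theorem mainTheorem7:
  fixes P0 Pp :: "'q::finite \<Rightarrow> int \<Rightarrow> 'q \<Rightarrow> real" and p q :: 'q
  assumes "pOC P0 Pp"
    and "pdown P0 Pp p q > 0"
    and "finite (Pre_star P0 Pp {(q, 0)} \<inter> Post_star P0 Pp {(p, 1)})"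
  shows "summable (\<lambda>n. real n * taboo P0 Pp n (p, 1) (q, 0)) \<and>
         Edown P0 Pp p q \<le> 15 * real (card (UNIV :: 'q set)) ^ 3 / xmin P0 Pp ^ (4 * card (UNIV :: 'q set) ^ 3)"
proof -
  interpret poc2 P0 Pp p q using assms(1,3) by (unfold_locales) auto
  show ?thesis using final[OF assms(2)] .
qed

end
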